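(* For no $\alpha\in\mathbb R$ is a right circular cylinder in $\mathbb R^3$ (of any radius, any axis) an $\alpha$-stationary surface.
   Context: Let $\Sigma$ be a connected oriented surface immersed in $\mathbb R^3\setminus\{0\}$ with unit normal $\nu$ and mean curvature $H$ (sum of the principal curvatures). For $\alpha\in\mathbb R$, $\Sigma$ is called $\alpha$-stationary if $H(p)=\alpha\,\frac{\langle\nu(p),p\rangle}{|p|^2}$ for all $p\in\Sigma$. *)

theory Defs
  imports "HOL-Analysis.Analysis"
begin

text \<open>Partial derivatives, unit normal, fundamental forms and mean curvature
  (sum of principal curvatures) in the classical local-coordinate form.\<close>

type_synonym psurf = "real \<Rightarrow> real \<Rightarrow> real^3"

definition pdu :: "psurf \<Rightarrow> psurf" where
  "pdu X u v = vector_derivative (\<lambda>s. X s v) (at u)"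

definition pdv :: "psurf \<Rightarrow> psurf" where
  "pdv X u v = vector_derivative (\<lambda>t. X u t) (at v)"

definition unit_normal :: "psurf \<Rightarrow> psurf" where
  "unit_normal X u v = (1 / norm (cross3 (pdu X u v) (pdv X u v))) *\<^sub>R (cross3 (pdu X u v) (pdv X u v))"

definition mean_curvature :: "psurf \<Rightarrow> real \<Rightarrow> real \<Rightarrow> real" where
  "mean_curvature X u v =
     (let N = unit_normal X u v;
          E = pdu X u v \<bullet> pdu X u v;
          F = pdu X u v \<bullet> pdv X u v;
          G = pdv X u v \<bullet> pdv X u v;
          e = pdu (pdu X) u v \<bullet> N;
          f = pdv (pdu X) u v \<bullet> N;
          g = pdv (pdv X) u v \<bullet> N
      in (e * G - 2 * f * F + g * E) / (E * G - F\<^sup>2))"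

definition alpha_stationary :: "real \<Rightarrow> psurf \<Rightarrow> (real \<times> real) set \<Rightarrow> bool" where
  "alpha_stationary \<alpha> X U \<longleftrightarrow>
     (\<forall>(u,v)\<in>U. X u v \<noteq> 0 \<and>
        mean_curvature X u v = \<alpha> * (unit_normal X u v \<bullet> X u v) / (norm (X u v))\<^sup>2)"

text \<open>Right circular cylinder of radius r, axis through a with unit direction d,
  where (e1, e2, d) is an orthonormal frame.\<close>
definition cylinder :: "real^3 \<Rightarrow> real^3 \<Rightarrow> real^3 \<Rightarrow> real^3 \<Rightarrow> real \<Rightarrow> psurf" where
  "cylinder a e1 e2 d r \<theta> t = a + (r * cos \<theta>) *\<^sub>R e1 + (r * sin \<theta>) *\<^sub>R e2 + t *\<^sub>R d"

end

theory Submission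
  imports Defs
begin
context fixes a e1 e2 d :: "real^3" and r :: real begin
lemma L1: "pdu (cylinder a e1 e2 d r) s t = (-r * sin s) *\<^sub>R e1 + (r * cos s) *\<^sub>R e2"
  unfolding pdu_def cylinder_def
  apply (rule vector_derivative_at)
  apply (auto intro!: derivative_eq_intros simp: has_vector_derivative_def fun_eq_iff algebra_simps)
  done
lemma L2: "pdv (cylinder a e1 e2 d r) s t = d"
  unfolding pdv_def cylinder_def
  apply (rule vector_derivative_at)
  apply (auto intro!: derivative_eq_intros simp: has_vector_derivative_def fun_eq_iff algebra_simps)
  done
lemma L3: "pdu (pdu (cylinder a e1 e2 d r)) s t = (-r * cos s) *\<^sub>R e1 + (-r * sin s) *\<^sub>R e2"
  unfolding pdu_def[of "pdu _"] L1
  apply (rule vector_derivative_at)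
  apply (auto intro!: derivative_eq_intros simp: has_vector_derivative_def fun_eq_iff algebra_simps)
  done
lemma L4: "pdv (pdu (cylinder a e1 e2 d r)) s t = 0"
  unfolding pdv_def L1 by simp
lemma L5: "pdv (pdv (cylinder a e1 e2 d r)) s t = 0"
  unfolding pdv_def[of "pdv _"] L2 by simp
end
lemma trip: "cross3 (x::real^3) (cross3 y z) = (x \<bullet> z) *\<^sub>R y - (x \<bullet> y) *\<^sub>R z"
  by (simp add: cross3_def inner_vec_def sum_3 vec_eq_iff forall_3 vector_3 algebra_simps)

theorem mainTheorem4:
  fixes \<alpha> r :: real and a e1 e2 d :: "real^3"
  assumes "r > 0"
    and "norm e1 = 1" and "norm e2 = 1" and "norm d = 1"
    and "e1 \<bullet> e2 = 0" and "e1 \<bullet> d = 0" and "e2 \<bullet> d = 0"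
  shows "\<not> alpha_stationary \<alpha> (cylinder a e1 e2 d r) UNIV"
proof
  assume st: "alpha_stationary \<alpha> (cylinder a e1 e2 d r) UNIV"
  define w where "w = cross3 e2 d"
  have "(norm w)^2 + 0^2 = (1*1)^2" using norm_cross_dot[of e2 d]
    by (simp only: w_def assms(3,4,7))
  hence "(norm w)^2 = 1" by simp
  hence nw: "norm w = 1" using norm_ge_zero[of w] power2_eq_1_iff[of "norm w"] by linarith
  have "cross3 e1 w = (e1 \<bullet> d) *\<^sub>R e2 - (e1 \<bullet> e2) *\<^sub>R d" unfolding w_def by (rule trip)
  hence "cross3 e1 w = 0" by (simp only: assms(5,6) scaleR_zero_left diff_zero)
  hence "0^2 + (e1 \<bullet> w)^2 = (1*1)^2" using norm_cross_dot[of e1 w]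
    by (simp only: nw assms(2) norm_zero)
  hence k2: "(e1 \<bullet> w)^2 = 1" by simp
  have wd: "w \<bullet> d = 0" unfolding w_def using dot_cross_self by (simp add: inner_commute)
  have ee: "e2 \<bullet> e2 = 1" "d \<bullet> d = 1"
    using assms by (simp_all add: power2_norm_eq_inner[symmetric])
  define k where "k = e1 \<bullet> w"
  define c where "c = r * \<alpha> * (w \<bullet> a + r * k)"
  define P where "P = a + r *\<^sub>R e1"
  have X: "cylinder a e1 e2 d r 0 t = P + t *\<^sub>R d" for t
    by (simp add: cylinder_def P_def)
  have N: "unit_normal (cylinder a e1 e2 d r) 0 t = w" for t
    unfolding unit_normal_def L1 L2 using \<open>r>0\<close> nw
    by (simp add: cross_mult_left w_def[symmetric])
  have H: "mean_curvature (cylinder a e1 e2 d r) 0 t = - k / r" for t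
    unfolding mean_curvature_def Let_def N L1 L2 L3 L4 L5 using \<open>r>0\<close> assms ee
    by (simp add: k_def inner_commute power2_eq_square field_simps)
  have eq: "- k * (norm (P + t *\<^sub>R d))^2 = c" for t
  proof -
    from st have h: "cylinder a e1 e2 d r 0 t \<noteq> 0 \<and> mean_curvature (cylinder a e1 e2 d r) 0 t =
      \<alpha> * (unit_normal (cylinder a e1 e2 d r) 0 t \<bullet> cylinder a e1 e2 d r 0 t) / (norm (cylinder a e1 e2 d r 0 t))\<^sup>2"
      unfolding alpha_stationary_def by blast
    hence nz: "norm (P + t *\<^sub>R d) \<noteq> 0" using X by simp
    have "w \<bullet> (P + t *\<^sub>R d) = w \<bullet> a + r * k" using wd
      by (simp add: P_def inner_add_right k_def inner_commute)
    with h X N H have "- k / r = \<alpha> * (w \<bullet> a + r * k) / (norm (P + t *\<^sub>R d))\<^sup>2" by simp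
    with nz \<open>r>0\<close> show ?thesis by (simp add: c_def field_simps)
  qed
  have sq: "(norm (P + t *\<^sub>R d))^2 = P \<bullet> P + 2 * t * (P \<bullet> d) + t^2" for t
    unfolding power2_norm_eq_inner using ee
    by (simp add: inner_add_left inner_add_right inner_commute[of d P] power2_eq_square algebra_simps)
  have "-k * (P \<bullet> P + 2 * (P \<bullet> d) + 1) = c" "-k * (P \<bullet> P - 2 * (P \<bullet> d) + 1) = c" "-k * (P \<bullet> P) = c"
    using eq[of 1] eq[of "-1"] eq[of 0] sq[of 1] sq[of "-1"] sq[of 0] by simp_all
  note E = this
  have "-2*k = (-k * (P \<bullet> P + 2 * (P \<bullet> d) + 1)) + (-k * (P \<bullet> P - 2 * (P \<bullet> d) + 1)) - 2 * (-k * (P \<bullet> P))"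
    by (simp add: algebra_simps)
  hence "-2*k = 0" unfolding E by simp
  hence "k = 0" by simp
  with k2 show False by (simp add: k_def)
qed
end
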